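(* Let $N$ be the five-point space with points $a,U,x,V,b$ whose open sets are exactly the subsets $S$ such that ($a\in S\Rightarrow U\in S$), ($x\in S\Rightarrow U,V\in S$) and ($b\in S\Rightarrow V\in S$). Let $M$ be the three-point space with points $a,w,b$ and open sets $\emptyset,\{w\},\{w,a\},\{w,b\},\{a,w,b\}$, and let $n:N\to M$ send $a\mapsto a$, $b\mapsto b$ and $U,x,V\mapsto w$. A topological space $X$ is normal (any two disjoint closed subsets have disjoint open neighbourhoods) iff $(\emptyset\to X)\rightthreetimes n$.
   Context: For morphisms $f:A\to B$ and $g:X\to Y$ in a category, write $f\rightthreetimes g$ ("$f$ has the left lifting property with respect to $g$") if for all morphisms $i:A\to X$, $j:B\to Y$ with $g\circ i=j\circ f$ there exists a morphism $h:B\to X$ with $h\circ f=i$ and $g\circ h=j$. "Normal" does not include any $T_1$ assumption. *)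

theory Defs
  imports "HOL-Analysis.Analysis"
begin

text \<open>A morphism A -> B is a function that is a continuous map
from A to B; equality of morphisms is equality on the underlying point set
(topspace) of the domain.\<close>

definition llp ::
  "'a topology \<Rightarrow> 'b topology \<Rightarrow> ('a \<Rightarrow> 'b) \<Rightarrow>
   'c topology \<Rightarrow> 'd topology \<Rightarrow> ('c \<Rightarrow> 'd) \<Rightarrow> bool" where
  "llp A B f X Y g \<longleftrightarrow>
     (\<forall>i j. continuous_map A X i \<and> continuous_map B Y j \<and>
            (\<forall>z\<in>topspace A. g (i z) = j (f z)) \<longrightarrow>
        (\<exists>h. continuous_map B X h \<and>
             (\<forall>z\<in>topspace A. h (f z) = i z) \<and>
             (\<forall>z\<in>topspace B. g (h z) = j z)))"

datatype ptN = Na | NU | Nx | NV | Nb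
datatype ptM = Ma | Mw | Mb

definition N_open :: "ptN set \<Rightarrow> bool" where
  "N_open S \<longleftrightarrow> (Na \<in> S \<longrightarrow> NU \<in> S) \<and> (Nx \<in> S \<longrightarrow> NU \<in> S \<and> NV \<in> S)
                 \<and> (Nb \<in> S \<longrightarrow> NV \<in> S)"

definition N_top :: "ptN topology" where
  "N_top = topology N_open"

definition M_open :: "ptM set \<Rightarrow> bool" where
  "M_open S \<longleftrightarrow> S \<in> {{}, {Mw}, {Mw, Ma}, {Mw, Mb}, {Ma, Mw, Mb}}"

definition M_top :: "ptM topology" where
  "M_top = topology M_open"

fun n_map :: "ptN \<Rightarrow> ptM" where
  "n_map Na = Ma"
| "n_map Nb = Mb"
| "n_map NU = Mw"
| "n_map Nx = Mw"
| "n_map NV = Mw"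

lemma istopology_N_open: "istopology N_open"
  unfolding istopology_def N_open_def by blast

lemma M_open_alt: "M_open S \<longleftrightarrow> (Ma \<in> S \<longrightarrow> Mw \<in> S) \<and> (Mb \<in> S \<longrightarrow> Mw \<in> S)"
proof -
  have S: "S = {z. z = Ma \<and> Ma \<in> S} \<union> {z. z = Mw \<and> Mw \<in> S} \<union> {z. z = Mb \<and> Mb \<in> S}"
    by auto (metis ptM.exhaust)+
  show ?thesis unfolding M_open_def
    by (subst S, cases "Ma \<in> S"; cases "Mw \<in> S"; cases "Mb \<in> S"; simp; blast)
qed

lemma istopology_M_open: "istopology M_open"
  unfolding istopology_def M_open_alt by blast

end

theory Submission
  imports Defs
begin

lemma openin_N: "openin N_top = N_open"
  by (simp add: N_top_def topology_inverse' istopology_N_open)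
lemma openin_M: "openin M_top = M_open"
  by (simp add: M_top_def topology_inverse' istopology_M_open)
lemma topspace_N: "topspace N_top = UNIV"
proof -
  have "N_open UNIV" by (simp add: N_open_def)
  then show ?thesis unfolding topspace_def openin_N by blast
qed
lemma topspace_M: "topspace M_top = UNIV"
proof -
  have "M_open UNIV" by (simp add: M_open_alt)
  then show ?thesis unfolding topspace_def openin_M by blast
qed

fun nb :: "ptN \<Rightarrow> ptN set" where
  "nb Na = {Na,NU}" | "nb NU = {NU}" | "nb Nx = {Nx,NU,NV}" | "nb NV = {NV}" | "nb Nb = {Nb,NV}"

lemma nb_sub: "N_open S \<Longrightarrow> p \<in> S \<Longrightarrow> nb p \<subseteq> S"
  by (cases p) (auto simp: N_open_def)
lemma nb_mem: "p \<in> nb p" by (cases p) auto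

lemma contN:
  assumes "\<And>p. openin X {z\<in>topspace X. h z \<in> nb p}"
  shows "continuous_map X N_top h"
  unfolding continuous_map_def topspace_N openin_N
proof safe
  fix S assume S: "N_open S"
  have "{z\<in>topspace X. h z \<in> S} = (\<Union>p\<in>S. {z\<in>topspace X. h z \<in> nb p})"
    using nb_sub[OF S] nb_mem by blast
  then show "openin X {z\<in>topspace X. h z \<in> S}" using assms by auto
qed auto

lemma llp_simp: "llp (trivial_topology :: unit topology) X (\<lambda>_. undefined) N_top M_top n_map \<longleftrightarrow>
  (\<forall>j. continuous_map X M_top j \<longrightarrow> (\<exists>h. continuous_map X N_top h \<and> (\<forall>z\<in>topspace X. n_map (h z) = j z)))"
  unfolding llp_def by simp

theorem claim1:
  fixes X :: "'a topology"
  shows "normal_space X \<longleftrightarrow>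
         llp (trivial_topology :: unit topology) X (\<lambda>_. undefined) N_top M_top n_map"
  unfolding llp_simp
proof
  assume nX: "normal_space X"
  show "\<forall>j. continuous_map X M_top j \<longrightarrow> (\<exists>h. continuous_map X N_top h \<and> (\<forall>z\<in>topspace X. n_map (h z) = j z))"
  proof safe
    fix j assume j: "continuous_map X M_top j"
    define A where "A = {z\<in>topspace X. j z = Ma}"
    define B where "B = {z\<in>topspace X. j z = Mb}"
    have cA: "closedin X A"
    proof -
      have e: "UNIV - {Ma} = {Mw,Mb}" by (rule set_eqI, case_tac x) auto
      have cM: "closedin M_top {Ma}" unfolding closedin_def topspace_M openin_M e
        by (simp add: M_open_alt)
      show ?thesis unfolding A_def using closedin_continuous_map_preimage[OF j cM] by simp
    qed
    have cB: "closedin X B"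
    proof -
      have e: "UNIV - {Mb} = {Ma,Mw}" by (rule set_eqI, case_tac x) auto
      have cM: "closedin M_top {Mb}" unfolding closedin_def topspace_M openin_M e
        by (simp add: M_open_alt)
      show ?thesis unfolding B_def using closedin_continuous_map_preimage[OF j cM] by simp
    qed
    have d: "disjnt A B" by (auto simp: A_def B_def disjnt_def)
    obtain U V where UV: "openin X U" "openin X V" "A \<subseteq> U" "B \<subseteq> V" "disjnt U V"
      using nX[unfolded normal_space_def, rule_format, OF conjI[OF cA conjI[OF cB d]]] by blast
    define h where "h z = (if z \<in> A then Na else if z \<in> B then Nb else if z \<in> U then NU
       else if z \<in> V then NV else Nx)" for z
    have UX: "U \<subseteq> topspace X" "V \<subseteq> topspace X" using UV by (simp_all add: openin_subset)
    have "continuous_map X N_top h"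
    proof (rule contN)
      fix p show "openin X {z\<in>topspace X. h z \<in> nb p}"
      proof (cases p)
        case Na
        have "{z\<in>topspace X. h z \<in> nb p} = U" using Na UV UX
          by (auto simp: h_def disjnt_def)
        then show ?thesis using UV by simp
      next
        case NU
        have "{z\<in>topspace X. h z \<in> nb p} = U - A" using NU UV UX
          by (auto simp: h_def disjnt_def)
        then show ?thesis using UV cA by (simp add: openin_diff)
      next
        case Nx
        have "{z\<in>topspace X. h z \<in> nb p} = topspace X - A - B" using Nx UV UX
          by (auto simp: h_def disjnt_def)
        then show ?thesis using cA cB by (simp add: openin_diff)
      next
        case NV
        have "{z\<in>topspace X. h z \<in> nb p} = V - B" using NV UV UX
          by (auto simp: h_def disjnt_def)
        then show ?thesis using UV cB by (simp add: openin_diff)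
      next
        case Nb
        have "{z\<in>topspace X. h z \<in> nb p} = V" using Nb UV UX
          by (auto simp: h_def disjnt_def)
        then show ?thesis using UV by simp
      qed
    qed
    moreover have "\<forall>z\<in>topspace X. n_map (h z) = j z"
    proof
      fix z assume "z \<in> topspace X"
      then show "n_map (h z) = j z"
        by (cases "j z") (auto simp: h_def A_def B_def)
    qed
    ultimately show "\<exists>h. continuous_map X N_top h \<and> (\<forall>z\<in>topspace X. n_map (h z) = j z)" by blast
  qed
next
  assume L: "\<forall>j. continuous_map X M_top j \<longrightarrow> (\<exists>h. continuous_map X N_top h \<and> (\<forall>z\<in>topspace X. n_map (h z) = j z))"
  show "normal_space X" unfolding normal_space_def
  proof safe
    fix A B assume cA: "closedin X A" and cB: "closedin X B" and d: "disjnt A B"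
    define j where "j z = (if z \<in> A then Ma else if z \<in> B then Mb else Mw)" for z
    have AX: "A \<subseteq> topspace X" "B \<subseteq> topspace X" using cA cB closedin_subset by auto
    have "continuous_map X M_top j"
      unfolding continuous_map_def topspace_M openin_M
    proof safe
      fix S assume S: "M_open S"
      show "openin X {z\<in>topspace X. j z \<in> S}"
      proof (cases "Mw \<in> S")
        case False
        have "S = {}"
        proof (rule equals0I)
          fix x assume "x \<in> S" then show False using S False by (cases x) (auto simp: M_open_alt)
        qed
        then show ?thesis by simp
      next
        case True
        have "{z\<in>topspace X. j z \<in> S} = topspace X - (if Ma \<in> S then {} else A) - (if Mb \<in> S then {} else B)"
          using True d by (auto simp: j_def disjnt_def)
        then show ?thesis using cA cB by (simp add: openin_diff)
      qed
    qed auto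
    then obtain h where h: "continuous_map X N_top h" "\<forall>z\<in>topspace X. n_map (h z) = j z"
      using L by blast
    have o1: "openin N_top {Na,NU}" "openin N_top {Nb,NV}" by (auto simp: N_open_def openin_N)
    have o: "openin X {z\<in>topspace X. h z \<in> {Na,NU}}" "openin X {z\<in>topspace X. h z \<in> {Nb,NV}}"
      using openin_continuous_map_preimage[OF h(1) o1(1)] openin_continuous_map_preimage[OF h(1) o1(2)] by simp_all
    have hn: "\<And>z q. z \<in> topspace X \<Longrightarrow> n_map (h z) = q \<Longrightarrow> j z = q" using h(2) by auto
    have sA: "A \<subseteq> {z\<in>topspace X. h z \<in> {Na,NU}}"
    proof
      fix z assume z: "z \<in> A"
      then have "n_map (h z) = Ma" using h(2) AX by (auto simp: j_def)
      then show "z \<in> {z\<in>topspace X. h z \<in> {Na,NU}}" using z AX by (cases "h z") auto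
    qed
    have sB: "B \<subseteq> {z\<in>topspace X. h z \<in> {Nb,NV}}"
    proof
      fix z assume z: "z \<in> B"
      have zA: "z \<notin> A" using z d by (auto simp: disjnt_def)
      have "z \<in> topspace X" using z AX by auto
      then have "n_map (h z) = Mb" using h(2) z zA by (simp add: j_def)
      then show "z \<in> {z\<in>topspace X. h z \<in> {Nb,NV}}" using z AX by (cases "h z") auto
    qed
    have "disjnt {z\<in>topspace X. h z \<in> {Na,NU}} {z\<in>topspace X. h z \<in> {Nb,NV}}"
      by (auto simp: disjnt_def)
    then show "\<exists>U V. openin X U \<and> openin X V \<and> A \<subseteq> U \<and> B \<subseteq> V \<and> disjnt U V"
      using o sA sB by blast
  qed
qed

end
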